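(* Let $(X,d,\mu)$ be a rectifiable metric median algebra. Then $d_\mu$ is a median metric on $X$ which is invariant under every isometric automorphism of $(X,d,\mu)$, and the intrinsic median operation of $(X,d_\mu)$ coincides with $\mu$. Moreover, if $(X,d,\mu)$ is uniformly rectifiable, then $d_\mu$ is bi-Lipschitz equivalent to $d$.
   Context: A median algebra is a set $M$ with a ternary operation $\mu$ such that $\mu(x,y,z)=\mu(x,z,y)=\mu(y,z,x)$, $\mu(x,x,y)=x$ and $\mu(\mu(x,y,z),u,v)=\mu(x,\mu(y,u,v),\mu(z,u,v))$. The median interval is $I(x,y)=\{z:\mu(x,y,z)=z\}$; a subset is convex if it contains $I(a,b)$ for all its elements $a,b$; a subalgebra is a subset closed under $\mu$. A wall is a partition $M=h\sqcup h^c$ into two non-empty convex subsets; it separates $a,b$ if they lie in different parts; $\mathcal{W}(M)$ denotes the set of walls and $\mathcal{W}^M(a|b)$ the walls separating $a,b$. For a finite median algebra $M$, the edges of its associated $\mathrm{CAT}(0)$ cube complex are the pairs $\{x,y\}\subseteq M$ separated by exactly one wall of $M$. A metric median algebra $(X,d,\mu)$ is a median algebra $(X,\mu)$ with a metric $d$ for which $\mu$ is continuous; an isometric automorphism is an isometry of $(X,d)$ commuting with $\mu$. For a finite subalgebra $M\subseteq X$ and $W\in\mathcal{W}(M)$, let $\lambda^M_{\max}(W)=\max d(a,b)$ over edges $\{a,b\}$ of $M$ separated by $W$; for $x,y\in X$ set $d^M_\mu(x,y)=\sum_{W\in\mathcal{W}^M(x|y)}\lambda^M_{\max}(W)$ if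 $x,y\in M$ and $0$ otherwise, and $d_\mu(x,y)=\sup_M d^M_\mu(x,y)\in[0,\infty]$ over all finite subalgebras $M$. $(X,d,\mu)$ is rectifiable if $d_\mu(x,y)<\infty$ for all $x,y$, and uniformly rectifiable if there is $L\ge0$ with $d_\mu\le L d$. A metric $\rho$ is a median metric if for all $x_1,x_2,x_3$ the set $\bigcap_{i=1}^3\{z:\rho(x_i,z)+\rho(z,x_{i+1})=\rho(x_i,x_{i+1})\}$ (indices mod $3$) is a single point, which defines the intrinsic median operation. *)

theory Defs
  imports "HOL-Analysis.Analysis"
begin

(* The ambient set X is the whole type 'a. *)

definition median_algebra :: "('a \<Rightarrow> 'a \<Rightarrow> 'a \<Rightarrow> 'a) \<Rightarrow> bool" where
  "median_algebra \<mu> \<longleftrightarrow>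
     (\<forall>x y z. \<mu> x y z = \<mu> x z y \<and> \<mu> x y z = \<mu> y z x) \<and>
     (\<forall>x y. \<mu> x x y = x) \<and>
     (\<forall>x y z u v. \<mu> (\<mu> x y z) u v = \<mu> x (\<mu> y u v) (\<mu> z u v))"

definition median_interval :: "('a \<Rightarrow> 'a \<Rightarrow> 'a \<Rightarrow> 'a) \<Rightarrow> 'a \<Rightarrow> 'a \<Rightarrow> 'a set" where
  "median_interval \<mu> x y = {z. \<mu> x y z = z}"

definition subalgebra :: "('a \<Rightarrow> 'a \<Rightarrow> 'a \<Rightarrow> 'a) \<Rightarrow> 'a set \<Rightarrow> bool" where
  "subalgebra \<mu> M \<longleftrightarrow> (\<forall>x\<in>M. \<forall>y\<in>M. \<forall>z\<in>M. \<mu> x y z \<in> M)"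

text \<open>Convexity of C inside the median algebra M (with the restricted median):
  the median interval of M between a and b is the interval intersected with M.\<close>
definition convex_in :: "('a \<Rightarrow> 'a \<Rightarrow> 'a \<Rightarrow> 'a) \<Rightarrow> 'a set \<Rightarrow> 'a set \<Rightarrow> bool" where
  "convex_in \<mu> M C \<longleftrightarrow> C \<subseteq> M \<and> (\<forall>a\<in>C. \<forall>b\<in>C. median_interval \<mu> a b \<inter> M \<subseteq> C)"

text \<open>A wall of M is an unordered partition of M into two nonempty convex parts,
  represented as the two-element set of its halves.\<close>
definition walls :: "('a \<Rightarrow> 'a \<Rightarrow> 'a \<Rightarrow> 'a) \<Rightarrow> 'a set \<Rightarrow> 'a set set set" where
  "walls \<mu> M = {{h, M - h} | h. h \<subseteq> M \<and> h \<noteq> {} \<and> M - h \<noteq> {} \<and>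
                    convex_in \<mu> M h \<and> convex_in \<mu> M (M - h)}"

definition separates :: "'a set set \<Rightarrow> 'a \<Rightarrow> 'a \<Rightarrow> bool" where
  "separates W a b \<longleftrightarrow> (\<exists>h\<in>W. a \<in> h \<and> b \<notin> h)"

definition sep_walls :: "('a \<Rightarrow> 'a \<Rightarrow> 'a \<Rightarrow> 'a) \<Rightarrow> 'a set \<Rightarrow> 'a \<Rightarrow> 'a \<Rightarrow> 'a set set set" where
  "sep_walls \<mu> M a b = {W \<in> walls \<mu> M. separates W a b}"

text \<open>Edges of the CAT(0) cube complex of a finite median algebra M.\<close>
definition is_edge :: "('a \<Rightarrow> 'a \<Rightarrow> 'a \<Rightarrow> 'a) \<Rightarrow> 'a set \<Rightarrow> 'a \<Rightarrow> 'a \<Rightarrow> bool" where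
  "is_edge \<mu> M a b \<longleftrightarrow> a \<in> M \<and> b \<in> M \<and> card (sep_walls \<mu> M a b) = 1"

definition lambda_max ::
  "('a \<Rightarrow> 'a \<Rightarrow> real) \<Rightarrow> ('a \<Rightarrow> 'a \<Rightarrow> 'a \<Rightarrow> 'a) \<Rightarrow> 'a set \<Rightarrow> 'a set set \<Rightarrow> real" where
  "lambda_max d \<mu> M W =
     Max {d a b | a b. is_edge \<mu> M a b \<and> W \<in> sep_walls \<mu> M a b}"

definition d_mu_M ::
  "('a \<Rightarrow> 'a \<Rightarrow> real) \<Rightarrow> ('a \<Rightarrow> 'a \<Rightarrow> 'a \<Rightarrow> 'a) \<Rightarrow> 'a set \<Rightarrow> 'a \<Rightarrow> 'a \<Rightarrow> real" where
  "d_mu_M d \<mu> M x y =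
     (if x \<in> M \<and> y \<in> M then (\<Sum>W\<in>sep_walls \<mu> M x y. lambda_max d \<mu> M W) else 0)"

definition d_mu :: "('a \<Rightarrow> 'a \<Rightarrow> real) \<Rightarrow> ('a \<Rightarrow> 'a \<Rightarrow> 'a \<Rightarrow> 'a) \<Rightarrow> 'a \<Rightarrow> 'a \<Rightarrow> ereal" where
  "d_mu d \<mu> x y = (SUP M \<in> {M. finite M \<and> subalgebra \<mu> M}. ereal (d_mu_M d \<mu> M x y))"

text \<open>Metric median algebra on the whole type: d is a metric and \<mu> is continuous
  (w.r.t. the product topology on X^3, expressed by epsilon-delta).\<close>
definition metric_median_algebra ::
  "('a \<Rightarrow> 'a \<Rightarrow> real) \<Rightarrow> ('a \<Rightarrow> 'a \<Rightarrow> 'a \<Rightarrow> 'a) \<Rightarrow> bool" where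
  "metric_median_algebra d \<mu> \<longleftrightarrow>
     Metric_space UNIV d \<and> median_algebra \<mu> \<and>
     (\<forall>x y z. \<forall>e>0. \<exists>\<delta>>0. \<forall>x' y' z'.
        d x x' < \<delta> \<and> d y y' < \<delta> \<and> d z z' < \<delta> \<longrightarrow> d (\<mu> x y z) (\<mu> x' y' z') < e)"

definition rectifiable :: "('a \<Rightarrow> 'a \<Rightarrow> real) \<Rightarrow> ('a \<Rightarrow> 'a \<Rightarrow> 'a \<Rightarrow> 'a) \<Rightarrow> bool" where
  "rectifiable d \<mu> \<longleftrightarrow> (\<forall>x y. d_mu d \<mu> x y < \<infinity>)"

definition uniformly_rectifiable :: "('a \<Rightarrow> 'a \<Rightarrow> real) \<Rightarrow> ('a \<Rightarrow> 'a \<Rightarrow> 'a \<Rightarrow> 'a) \<Rightarrow> bool" where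
  "uniformly_rectifiable d \<mu> \<longleftrightarrow>
     (\<exists>L::real. L \<ge> 0 \<and> (\<forall>x y. d_mu d \<mu> x y \<le> ereal (L * d x y)))"

definition isometric_automorphism ::
  "('a \<Rightarrow> 'a \<Rightarrow> real) \<Rightarrow> ('a \<Rightarrow> 'a \<Rightarrow> 'a \<Rightarrow> 'a) \<Rightarrow> ('a \<Rightarrow> 'a) \<Rightarrow> bool" where
  "isometric_automorphism d \<mu> f \<longleftrightarrow>
     bij f \<and> (\<forall>x y. d (f x) (f y) = d x y) \<and>
     (\<forall>x y z. f (\<mu> x y z) = \<mu> (f x) (f y) (f z))"

definition geod_between :: "('a \<Rightarrow> 'a \<Rightarrow> real) \<Rightarrow> 'a \<Rightarrow> 'a \<Rightarrow> 'a \<Rightarrow> bool" where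
  "geod_between \<rho> a z b \<longleftrightarrow> \<rho> a z + \<rho> z b = \<rho> a b"

definition median_set :: "('a \<Rightarrow> 'a \<Rightarrow> real) \<Rightarrow> 'a \<Rightarrow> 'a \<Rightarrow> 'a \<Rightarrow> 'a set" where
  "median_set \<rho> x1 x2 x3 =
     {z. geod_between \<rho> x1 z x2 \<and> geod_between \<rho> x2 z x3 \<and> geod_between \<rho> x3 z x1}"

definition median_metric :: "('a \<Rightarrow> 'a \<Rightarrow> real) \<Rightarrow> bool" where
  "median_metric \<rho> \<longleftrightarrow> Metric_space UNIV \<rho> \<and>
     (\<forall>x1 x2 x3. \<exists>z. median_set \<rho> x1 x2 x3 = {z})"

definition intrinsic_median :: "('a \<Rightarrow> 'a \<Rightarrow> real) \<Rightarrow> 'a \<Rightarrow> 'a \<Rightarrow> 'a \<Rightarrow> 'a" where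
  "intrinsic_median \<rho> x1 x2 x3 = (THE z. z \<in> median_set \<rho> x1 x2 x3)"

end

theory Submission
  imports Defs
begin



locale ma = fixes m :: "'a \<Rightarrow> 'a \<Rightarrow> 'a \<Rightarrow> 'a"
  assumes c1: "m x y z = m x z y" and c2: "m x y z = m y z x" and maj: "m x x y = x"
  and dis: "m (m x y z) u v = m x (m y u v) (m z u v)"
begin
lemma c3: "m x y z = m y x z" by (metis c1 c2)
lemma maj2: "m x y x = x" by (metis c1 maj)
lemma maj3: "m y x x = x" by (metis c2 maj)
lemma E1: "m x y (m x y z) = m x y z" by (metis dis maj maj2) 
lemma E2: "m x y z = z \<Longrightarrow> m x y w = w \<Longrightarrow> m z w v = v \<Longrightarrow> m x y v = v"
  by (metis c2 dis)
lemma E3: "m c b a = a \<Longrightarrow> m a b c = c \<Longrightarrow> a = c"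
  using c2 c3 by simp
lemma E5: "m x1 x2 z = z \<Longrightarrow> m x2 x3 z = z \<Longrightarrow> m x1 x3 z = z \<Longrightarrow> z = m x1 x2 x3"
  using c2[of x1 z x3] c2[of x3 x3 z]
    c2[of "m x2 x3 x1" "m x2 x3 x1" "m z x3 x1"] c2[of x3 z "m x2 x2 z"]
    c2[of z "m x2 x2 z" x3] c2[of x3 x1 x2] c2[of z x2 z] c2[of x1 x2 x3]
    dis[of z x3 x1 x3 z] dis[of x1 z x3 x3 z]
    dis[of "m x2 x3 x1" x2 z x3 x1] dis[of x3 x1 x2 x2 z]
    dis[of x2 x2 z x3 z] maj2[of x3 z] maj2[of "m x2 x3 x1" "m z x3 x1"]
    maj2[of z x2] maj2[of z x3] by argo
lemma E6: "m c1 u w1 = w1 \<Longrightarrow> m c2 u w2 = w2 \<Longrightarrow> m w1 w2 w = w \<Longrightarrow> m (m c1 c2 w) u w = w"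
  by (smt (verit, best) c2 dis maj2)
lemma E7: "m c1 u y = y \<Longrightarrow> m c2 v y = y \<Longrightarrow> m u v w = w \<Longrightarrow> m c1 (m c2 w y) y = y"
  by (smt (verit, best) c2 dis maj2)

definition conv :: "'a set \<Rightarrow> bool" where
  "conv C \<longleftrightarrow> (\<forall>a\<in>C. \<forall>b\<in>C. \<forall>z. m a b z = z \<longrightarrow> z \<in> C)"

lemma conv_med: "conv C \<Longrightarrow> a \<in> C \<Longrightarrow> b \<in> C \<Longrightarrow> m a b z \<in> C"
  unfolding conv_def using E1 by blast

lemma separation:
  assumes "x \<noteq> y"
  shows "\<exists>h. conv h \<and> conv (- h) \<and> x \<in> h \<and> y \<notin> h"
proof -
  define F where "F = {C. conv C \<and> x \<in> C \<and> y \<notin> C}"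
  have xF: "{x} \<in> F" unfolding F_def conv_def using assms maj by auto
  have "\<forall>C\<in>chains F. \<exists>U\<in>F. \<forall>X\<in>C. X \<subseteq> U"
  proof
    fix C assume C: "C \<in> chains F"
    show "\<exists>U\<in>F. \<forall>X\<in>C. X \<subseteq> U"
    proof (cases "C = {}")
      case True then show ?thesis using xF by auto
    next
      case False
      have "\<Union>C \<in> F"
      proof -
        have "conv (\<Union>C)" unfolding conv_def
        proof (intro ballI allI impI)
          fix a b z assume a: "a \<in> \<Union>C" and b: "b \<in> \<Union>C" and z: "m a b z = z"
          from a obtain A where A: "A \<in> C" "a \<in> A" by auto
          from b obtain B where B: "B \<in> C" "b \<in> B" by auto
          from C A B have "A \<subseteq> B \<or> B \<subseteq> A" unfolding chains_def chain_subset_def by auto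
          moreover have "conv A" "conv B" using C A B unfolding chains_def F_def by auto
          ultimately show "z \<in> \<Union>C" using A B z unfolding conv_def by blast
        qed
        then show ?thesis using C False unfolding chains_def F_def by auto
      qed
      then show ?thesis by auto
    qed
  qed
  from Zorn_Lemma2[OF this] obtain M where M: "M \<in> F" and mx: "\<And>X. X \<in> F \<Longrightarrow> M \<subseteq> X \<Longrightarrow> X = M"
    by blast
  have cM: "conv M" "x \<in> M" "y \<notin> M" using M unfolding F_def by auto
  have key: "\<exists>c\<in>M. m c u y = y" if u: "u \<notin> M" for u
  proof (rule ccontr)
    assume nc: "\<not> (\<exists>c\<in>M. m c u y = y)"
    define K where "K = {z. \<exists>c\<in>M. m c u z = z}"
    have "conv K" unfolding conv_def
    proof (intro ballI allI impI)
      fix a b z assume "a \<in> K" "b \<in> K" "m a b z = z"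
      then obtain c1 c2 where "c1 \<in> M" "c2 \<in> M" "m c1 u a = a" "m c2 u b = b"
        unfolding K_def by auto
      then show "z \<in> K" unfolding K_def using E6 conv_med[OF cM(1)] \<open>m a b z = z\<close> by blast
    qed
    moreover have "M \<subseteq> K" unfolding K_def using maj2 by auto
    moreover have "u \<in> K" unfolding K_def using cM maj3 by auto
    moreover have "y \<notin> K" unfolding K_def using nc by auto
    ultimately have "K \<in> F" "M \<subseteq> K" using cM unfolding F_def by auto
    with mx have "K = M" by auto
    with \<open>u \<in> K\<close> u show False by auto
  qed
  have "conv (- M)" unfolding conv_def
  proof (intro ballI allI impI)
    fix u v w assume u: "u \<in> - M" and v: "v \<in> - M" and w: "m u v w = w"
    show "w \<in> - M"
    proof
      assume wM: "w \<in> M"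
      obtain c1 where c1: "c1 \<in> M" "m c1 u y = y" using key u by auto
      obtain c2 where c2: "c2 \<in> M" "m c2 v y = y" using key v by auto
      have "m c1 (m c2 w y) y = y" using E7 c1 c2 w by blast
      moreover have "m c2 w y \<in> M" using conv_med[OF cM(1) c2(1) wM] .
      ultimately have "y \<in> M" using cM(1) c1(1) unfolding conv_def by blast
      with cM show False by auto
    qed
  qed
  then show ?thesis using cM by auto
qed

definition halfsp :: "'a set \<Rightarrow> bool" where "halfsp h \<longleftrightarrow> conv h \<and> conv (- h)"

lemma halfsp_med:
  assumes "halfsp h"
  shows "m x y z \<in> h \<longleftrightarrow> (x \<in> h \<and> y \<in> h) \<or> (y \<in> h \<and> z \<in> h) \<or> (x \<in> h \<and> z \<in> h)"
proof -
  have ch: "conv h" and cc: "conv (-h)" using assms halfsp_def by auto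
  have a1: "m x y z \<in> h" if "x \<in> h" "y \<in> h" using conv_med[OF ch that] .
  have a2: "m x y z \<in> h" if "y \<in> h" "z \<in> h" using conv_med[OF ch that] c2 by metis
  have a3: "m x y z \<in> h" if "x \<in> h" "z \<in> h" using conv_med[OF ch that] c1 by metis
  have b1: "m x y z \<in> -h" if "x \<in> -h" "y \<in> -h" using conv_med[OF cc that] .
  have b2: "m x y z \<in> -h" if "y \<in> -h" "z \<in> -h" using conv_med[OF cc that] c2 by metis
  have b3: "m x y z \<in> -h" if "x \<in> -h" "z \<in> -h" using conv_med[OF cc that] c1 by metis
  show ?thesis using a1 a2 a3 b1 b2 b3 by blast
qed

inductive_set gen :: "'a set \<Rightarrow> 'a set" for S where
  base: "x \<in> S \<Longrightarrow> x \<in> gen S"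
| step: "x \<in> gen S \<Longrightarrow> y \<in> gen S \<Longrightarrow> z \<in> gen S \<Longrightarrow> m x y z \<in> gen S"

lemma gen_agree:
  assumes "halfsp h" "halfsp h'" "h \<inter> S = h' \<inter> S" "z \<in> gen S"
  shows "z \<in> h \<longleftrightarrow> z \<in> h'"
  using assms(4)
proof induction
  case (base x) then show ?case using assms(3) by blast
next
  case (step x y z) then show ?case using halfsp_med[OF assms(1)] halfsp_med[OF assms(2)] by blast
qed

lemma gen_finite:
  assumes "finite S" shows "finite (gen S)"
proof -
  define \<phi> where "\<phi> z = {h \<inter> S | h. halfsp h \<and> z \<in> h}" for z
  have "inj_on \<phi> (gen S)"
  proof (rule inj_onI)
    fix z z' assume z: "z \<in> gen S" and z': "z' \<in> gen S" and e: "\<phi> z = \<phi> z'"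
    show "z = z'"
    proof (rule ccontr)
      assume "z \<noteq> z'"
      then obtain h where h: "halfsp h" "z \<in> h" "z' \<notin> h" using separation halfsp_def by blast
      then have "h \<inter> S \<in> \<phi> z'" using e unfolding \<phi>_def by auto
      then obtain h' where "halfsp h'" "z' \<in> h'" "h \<inter> S = h' \<inter> S" unfolding \<phi>_def by auto
      with gen_agree[OF h(1) this(1) this(3) z'] h show False by auto
    qed
  qed
  moreover have "\<phi> ` gen S \<subseteq> Pow (Pow S)" unfolding \<phi>_def by auto
  moreover have "finite (Pow (Pow S))" using assms by auto
  ultimately show ?thesis using finite_imageD finite_subset by metis
qed

lemma gen_sub: "S \<subseteq> gen S" using gen.base by auto
lemma gen_subalg: "subalgebra m (gen S)" unfolding subalgebra_def using gen.step by auto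

end

lemma ma_of: "median_algebra \<mu> \<Longrightarrow> ma \<mu>"
  unfolding median_algebra_def ma_def by metis




context ma begin

abbreviation "sepw M a b \<equiv> sep_walls m M a b"

lemma walls_orient:
  assumes W: "W \<in> walls m M" and a: "a \<in> M"
  shows "\<exists>k. W = {k, M - k} \<and> a \<in> k \<and> k \<subseteq> M \<and> M - k \<noteq> {} \<and> convex_in m M k \<and> convex_in m M (M - k)"
proof -
  obtain h where h: "W = {h, M - h}" "h \<subseteq> M" "h \<noteq> {}" "M - h \<noteq> {}" "convex_in m M h" "convex_in m M (M - h)"
    using W unfolding walls_def by blast
  show ?thesis
  proof (cases "a \<in> h")
    case True then show ?thesis using h by blast
  next
    case False
    have "M - (M - h) = h" using h(2) by auto
    then show ?thesis using h False a by (rule_tac x="M - h" in exI) auto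
  qed
qed

lemma sep_char:
  assumes "W = {k, M - k}" "k \<subseteq> M" "p \<in> M" "q \<in> M"
  shows "separates W p q \<longleftrightarrow> (p \<in> k \<longleftrightarrow> q \<notin> k)"
  using assms unfolding separates_def by auto

lemma walls_finite: "finite M \<Longrightarrow> finite (walls m M)"
proof -
  assume "finite M"
  have "walls m M \<subseteq> Pow (Pow M)" unfolding walls_def by auto
  then show ?thesis using \<open>finite M\<close> by (meson finite_Pow_iff finite_subset)
qed

lemma sepw_finite: "finite M \<Longrightarrow> finite (sepw M a b)"
  unfolding sep_walls_def using walls_finite by auto

lemma sepw_sym: assumes "a \<in> M" "b \<in> M" shows "sepw M a b = sepw M b a"
proof -
  have "separates W a b \<longleftrightarrow> separates W b a" if "W \<in> walls m M" for W
    using walls_orient[OF that assms(1)] sep_char assms by metis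
  then show ?thesis unfolding sep_walls_def by auto
qed

lemma sepw_refl: "sepw M a a = {}"
  unfolding sep_walls_def separates_def by auto

lemma convex_inD: "convex_in m M k \<Longrightarrow> a \<in> k \<Longrightarrow> b \<in> k \<Longrightarrow> z \<in> M \<Longrightarrow> m a b z = z \<Longrightarrow> z \<in> k"
  unfolding convex_in_def median_interval_def by blast

lemma sepw_split:
  assumes a: "a \<in> M" and b: "b \<in> M" and c: "c \<in> M" and cab: "m a b c = c"
  shows "sepw M a b = sepw M a c \<union> sepw M c b" and "sepw M a c \<inter> sepw M c b = {}"
proof -
  have "(separates W a b \<longleftrightarrow> separates W a c \<or> separates W c b) \<and> \<not> (separates W a c \<and> separates W c b)"
    if W: "W \<in> walls m M" for W
  proof -
    obtain k where k: "W = {k, M - k}" "a \<in> k" "k \<subseteq> M" "convex_in m M k" "convex_in m M (M - k)"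
      using walls_orient[OF W a] by blast
    have "b \<in> k \<Longrightarrow> c \<in> k" using convex_inD[OF k(4) k(2) _ c cab] by blast
    then show ?thesis using sep_char[OF k(1) k(3)] a b c k(2) by auto
  qed
  then show "sepw M a b = sepw M a c \<union> sepw M c b" and "sepw M a c \<inter> sepw M c b = {}"
    unfolding sep_walls_def by auto
qed

lemma sepw_tri:
  assumes a: "a \<in> M" and b: "b \<in> M" and c: "c \<in> M"
  shows "sepw M a c \<subseteq> sepw M a b \<union> sepw M b c"
proof -
  have "separates W a c \<Longrightarrow> separates W a b \<or> separates W b c" if W: "W \<in> walls m M" for W
  proof -
    obtain k where k: "W = {k, M - k}" "a \<in> k" "k \<subseteq> M"
      using walls_orient[OF W a] by blast
    then show "separates W a c \<Longrightarrow> separates W a b \<or> separates W b c"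
      using sep_char[OF k(1) k(3)] a b c by auto
  qed
  then show ?thesis unfolding sep_walls_def by auto
qed

lemma wall_exists:
  assumes a: "a \<in> M" and b: "b \<in> M" and ab: "a \<noteq> b"
  shows "sepw M a b \<noteq> {}"
proof -
  obtain h where h: "conv h" "conv (- h)" "a \<in> h" "b \<notin> h" using separation[OF ab] by blast
  define k where "k = h \<inter> M"
  have ck: "convex_in m M k" unfolding convex_in_def median_interval_def k_def
    using h(1) unfolding conv_def by blast
  have "M - k = (- h) \<inter> M" unfolding k_def by auto
  then have ck': "convex_in m M (M - k)" unfolding convex_in_def median_interval_def
    using h(2) unfolding conv_def by auto
  have W: "{k, M - k} \<in> walls m M" unfolding walls_def
    using ck ck' a b h k_def by blast
  have "separates {k, M - k} a b" unfolding separates_def k_def using a b h by auto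
  then show ?thesis using W unfolding sep_walls_def by auto
qed

lemma I_sub: "m a b c = c \<Longrightarrow> m a c z = z \<Longrightarrow> m a b z = z"
  using E2[of a b a c z] maj2 by metis

lemma I_antisym: "m a b c = c \<Longrightarrow> m c b a = a \<Longrightarrow> a = c"
  using E3 by metis

lemma I_left: "m a x (m a c x) = m a c x" using E1 c1 by metis
lemma I_right: "m c x (m a c x) = m a c x" using E1 c1 c3 by metis

lemma edge_step:
  assumes fin: "finite M" and sub: "subalgebra m M"
    and a: "a \<in> M" and b: "b \<in> M" and ab: "a \<noteq> b"
  shows "\<exists>c\<in>M. m a b c = c \<and> c \<noteq> a \<and> card (sepw M a c) = 1"
proof -
  define Cs where "Cs = {c \<in> M. m a b c = c \<and> c \<noteq> a}"
  have "b \<in> Cs" unfolding Cs_def using b ab maj3 by auto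
  have "finite Cs" unfolding Cs_def using fin by auto
  define f where "f c = card {z \<in> M. m a c z = z}" for c
  obtain c where c: "c \<in> Cs" and cmin: "\<And>c'. c' \<in> Cs \<Longrightarrow> f c \<le> f c'"
    using ex_has_least_nat[of "\<lambda>c. c \<in> Cs" b f] \<open>b \<in> Cs\<close> by blast
  have cM: "c \<in> M" "m a b c = c" "c \<noteq> a" using c unfolding Cs_def by auto
  have Iac: "{z \<in> M. m a c z = z} = {a, c}"
  proof (rule ccontr)
    assume "{z \<in> M. m a c z = z} \<noteq> {a, c}"
    moreover have "{a, c} \<subseteq> {z \<in> M. m a c z = z}" using a cM maj maj2 maj3 by auto
    ultimately obtain z where z: "z \<in> M" "m a c z = z" "z \<noteq> a" "z \<noteq> c" by auto
    have "z \<in> Cs" unfolding Cs_def using z I_sub[OF cM(2) z(2)] by auto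
    have sub1: "{w \<in> M. m a z w = w} \<subseteq> {w \<in> M. m a c w = w}" using I_sub[OF z(2)] by auto
    have "c \<notin> {w \<in> M. m a z w = w}"
    proof
      assume "c \<in> {w \<in> M. m a z w = w}"
      then have "m a z c = c" by auto
      then show False using I_antisym[of a z c] z(2) z(4) c3 c2 c1
        by (metis E3)
    qed
    then have "{w \<in> M. m a z w = w} \<subset> {w \<in> M. m a c w = w}" using sub1 cM(1) maj3 by auto
    then have "f z < f c" unfolding f_def using fin by (auto intro: psubset_card_mono)
    with cmin[OF \<open>z \<in> Cs\<close>] show False by auto
  qed
  have ne: "sepw M a c \<noteq> {}" using wall_exists[OF a cM(1)] cM(3) by auto
  have le1: "W1 = W2" if W1: "W1 \<in> sepw M a c" and W2: "W2 \<in> sepw M a c" for W1 W2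
  proof (rule ccontr)
    assume ne: "W1 \<noteq> W2"
    obtain h1 where h1: "W1 = {h1, M - h1}" "a \<in> h1" "h1 \<subseteq> M" "convex_in m M h1" "convex_in m M (M - h1)"
      using walls_orient[of W1 M a] W1 a unfolding sep_walls_def by blast
    obtain h2 where h2: "W2 = {h2, M - h2}" "a \<in> h2" "h2 \<subseteq> M" "convex_in m M h2" "convex_in m M (M - h2)"
      using walls_orient[of W2 M a] W2 a unfolding sep_walls_def by blast
    have c1': "c \<notin> h1" using W1 sep_char[OF h1(1) h1(3) a cM(1)] h1(2) unfolding sep_walls_def by auto
    have c2': "c \<notin> h2" using W2 sep_char[OF h2(1) h2(3) a cM(1)] h2(2) unfolding sep_walls_def by auto
    have hne: "h1 \<noteq> h2" using ne h1(1) h2(1) by auto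
    have gen: False if g: "k1 \<subseteq> M" "a \<in> k1" "c \<notin> k1" "convex_in m M k1"
      "a \<in> k2" "c \<notin> k2" "convex_in m M (M - k2)" "x \<in> k1" "x \<in> M" "x \<notin> k2" for k1 k2 x
    proof -
      define p where "p = m a c x"
      have pM: "p \<in> M" unfolding p_def using sub a cM(1) g(9) unfolding subalgebra_def by auto
      have "p \<in> {z \<in> M. m a c z = z}" using pM E1 unfolding p_def by auto
      then have pac: "p = a \<or> p = c" using Iac by auto
      have "p \<in> k1" using convex_inD[OF g(4) g(2) g(8) pM] I_left unfolding p_def by metis
      moreover have "p \<in> M - k2" using convex_inD[OF g(7) _ _ pM, of c x] cM(1) g I_right
        unfolding p_def by auto
      ultimately show False using pac g by auto
    qed
    from hne obtain x where "x \<in> h1 \<and> x \<notin> h2 \<or> x \<in> h2 \<and> x \<notin> h1" by blast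
    then show False
      using gen[of h1 h2 x] gen[of h2 h1 x] h1 h2 c1' c2' by blast
  qed
  have "card (sepw M a c) = 1" using ne le1 by (metis card_1_singletonE is_singletonI' is_singleton_altdef)
  then show ?thesis using cM by auto
qed

end



locale mma = ma m for m :: "'a \<Rightarrow> 'a \<Rightarrow> 'a \<Rightarrow> 'a" +
  fixes d :: "'a \<Rightarrow> 'a \<Rightarrow> real"
  assumes met: "Metric_space UNIV d"
begin

lemma dnn: "0 \<le> d x y" using Metric_space.nonneg[OF met] .
lemma dtri: "d x z \<le> d x y + d y z" using Metric_space.triangle[OF met] by blast
lemma dsym: "d x y = d y x" using Metric_space.commute[OF met] .
lemma d0: "d x x = 0" using Metric_space.zero[OF met] by blast
lemma d0iff: "d x y = 0 \<longleftrightarrow> x = y" using Metric_space.zero[OF met] by blast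

abbreviation "lam M W \<equiv> lambda_max d m M W"
abbreviation "DM M x y \<equiv> d_mu_M d m M x y"

lemma edge_vals_finite:
  assumes "finite M"
  shows "finite {d a b | a b. is_edge m M a b \<and> W \<in> sepw M a b}"
proof -
  have "{d a b | a b. is_edge m M a b \<and> W \<in> sepw M a b} \<subseteq> (\<lambda>(a,b). d a b) ` (M \<times> M)"
    unfolding is_edge_def by auto
  then show ?thesis using assms finite_subset by blast
qed

lemma lam_ge:
  assumes "finite M" "is_edge m M a b" "W \<in> sepw M a b"
  shows "d a b \<le> lam M W"
  unfolding lambda_max_def using assms edge_vals_finite[OF assms(1)] by (auto intro!: Max_ge)

lemma path_main:
  assumes fin: "finite M" and sub: "subalgebra m M" and a: "a \<in> M" and b: "b \<in> M"
  shows "d a b \<le> (\<Sum>W\<in>sepw M a b. lam M W) \<and>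
         (\<forall>W\<in>sepw M a b. \<exists>a' b'. is_edge m M a' b' \<and> W \<in> sepw M a' b')"
  using a
proof (induction "card {z \<in> M. m a b z = z}" arbitrary: a rule: less_induct)
  case less
  show ?case
  proof (cases "a = b")
    case True then show ?thesis using d0 sepw_refl by simp
  next
    case False
    obtain c where c: "c \<in> M" "m a b c = c" "c \<noteq> a" "card (sepw M a c) = 1"
      using edge_step[OF fin sub less.prems b False] by blast
    obtain W0 where W0: "sepw M a c = {W0}" using c(4) card_1_singletonE by blast
    have sub1: "{z \<in> M. m c b z = z} \<subseteq> {z \<in> M. m a b z = z}"
      using E2[of a b c b] c(2) maj3 by auto
    have "a \<notin> {z \<in> M. m c b z = z}" using I_antisym[OF c(2)] c(3) by auto
    moreover have "a \<in> {z \<in> M. m a b z = z}" using less.prems maj2 by auto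
    ultimately have "{z \<in> M. m c b z = z} \<subset> {z \<in> M. m a b z = z}" using sub1 by blast
    then have lt: "card {z \<in> M. m c b z = z} < card {z \<in> M. m a b z = z}"
      using fin by (auto intro: psubset_card_mono)
    have IH: "d c b \<le> (\<Sum>W\<in>sepw M c b. lam M W)"
       "\<forall>W\<in>sepw M c b. \<exists>a' b'. is_edge m M a' b' \<and> W \<in> sepw M a' b'"
      using less.hyps[OF lt c(1)] by auto
    have spl: "sepw M a b = sepw M a c \<union> sepw M c b" "sepw M a c \<inter> sepw M c b = {}"
      using sepw_split[OF less.prems b c(1) c(2)] by auto
    have edge: "is_edge m M a c" unfolding is_edge_def using less.prems c by auto
    have "d a c \<le> lam M W0" using lam_ge[OF fin edge] W0 by auto
    moreover have "(\<Sum>W\<in>sepw M a b. lam M W) = lam M W0 + (\<Sum>W\<in>sepw M c b. lam M W)"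
      using spl W0 sepw_finite[OF fin] by (simp add: sum.union_disjoint)
    ultimately have 1: "d a b \<le> (\<Sum>W\<in>sepw M a b. lam M W)"
      using dtri[of a b c] IH(1) by linarith
    have 2: "\<forall>W\<in>sepw M a b. \<exists>a' b'. is_edge m M a' b' \<and> W \<in> sepw M a' b'"
      using spl W0 IH(2) edge by (metis Un_iff singletonI)
    show ?thesis using 1 2 by blast
  qed
qed

lemma wall_has_edge:
  assumes fin: "finite M" and sub: "subalgebra m M" and W: "W \<in> walls m M"
  shows "\<exists>a b. is_edge m M a b \<and> W \<in> sepw M a b"
proof -
  obtain h where h: "W = {h, M - h}" "h \<subseteq> M" "h \<noteq> {}" "M - h \<noteq> {}"
    using W unfolding walls_def by blast
  obtain a b where ab: "a \<in> h" "b \<in> M - h" using h by blast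
  have "W \<in> sepw M a b" unfolding sep_walls_def separates_def using W h ab by auto
  then show ?thesis using path_main[OF fin sub, of a b] ab h by auto
qed

lemma lam_attained:
  assumes fin: "finite M" and sub: "subalgebra m M" and W: "W \<in> walls m M"
  shows "\<exists>a b. is_edge m M a b \<and> W \<in> sepw M a b \<and> lam M W = d a b"
proof -
  let ?S = "{d a b | a b. is_edge m M a b \<and> W \<in> sepw M a b}"
  have "?S \<noteq> {}" using wall_has_edge[OF assms] by auto
  then have "lam M W \<in> ?S" unfolding lambda_max_def using edge_vals_finite[OF fin] Max_in by blast
  then show ?thesis by auto
qed

lemma lam_nonneg:
  assumes fin: "finite M" and sub: "subalgebra m M" and W: "W \<in> walls m M"
  shows "0 \<le> lam M W"
  using lam_attained[OF assms] dnn by metis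

lemma DM_nonneg:
  assumes fin: "finite M" and sub: "subalgebra m M"
  shows "0 \<le> DM M x y"
  unfolding d_mu_M_def using lam_nonneg[OF fin sub] unfolding sep_walls_def
  by (auto intro: sum_nonneg)

lemma DM_split:
  assumes fin: "finite M" and x: "x \<in> M" and y: "y \<in> M" and c: "c \<in> M" and cxy: "m x y c = c"
  shows "DM M x y = DM M x c + DM M c y"
  unfolding d_mu_M_def using x y c sepw_split[OF x y c cxy] sepw_finite[OF fin]
  by (simp add: sum.union_disjoint)

lemma DM_sym: "DM M x y = DM M y x"
  unfolding d_mu_M_def using sepw_sym by auto

lemma DM_refl: "DM M x x = 0"
  unfolding d_mu_M_def using sepw_refl by simp

lemma d_le_DM:
  assumes fin: "finite M" and sub: "subalgebra m M" and x: "x \<in> M" and y: "y \<in> M"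
  shows "d x y \<le> DM M x y"
  unfolding d_mu_M_def using path_main[OF fin sub x y] x y by auto

definition restr :: "'a set \<Rightarrow> 'a set set \<Rightarrow> 'a set set" where
  "restr M W = (\<lambda>h. h \<inter> M) ` W"

lemma restr_wall:
  assumes MM: "M \<subseteq> M'" and W: "W \<in> walls m M'" and a: "a \<in> M" and b: "b \<in> M"
    and s: "separates W a b"
  shows "restr M W \<in> walls m M \<and> separates (restr M W) a b"
proof -
  obtain k where k: "W = {k, M' - k}" "a \<in> k" "k \<subseteq> M'" "convex_in m M' k" "convex_in m M' (M' - k)"
    using walls_orient[OF W] a MM by blast
  have bk: "b \<notin> k" using sep_char[OF k(1) k(3)] s a b MM k(2) by auto
  have R: "restr M W = {k \<inter> M, M - k \<inter> M}" unfolding restr_def k(1) using MM by auto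
  have c1: "convex_in m M (k \<inter> M)" using k(4) unfolding convex_in_def using MM by blast
  have "M - k \<inter> M = (M' - k) \<inter> M" using MM by auto
  then have c2: "convex_in m M (M - k \<inter> M)" using k(5) unfolding convex_in_def using MM by blast
  have "restr M W \<in> walls m M" unfolding R walls_def using c1 c2 a b k(2) bk by blast
  moreover have "separates (restr M W) a b" unfolding R separates_def using a b k(2) bk by auto
  ultimately show ?thesis by blast
qed

lemma restr_back:
  assumes "x \<in> M" "y \<in> M" "separates (restr M W) x y"
  shows "separates W x y"
  using assms unfolding restr_def separates_def by auto

lemma DM_mono:
  assumes fin: "finite M" and sub: "subalgebra m M" and fin': "finite M'" and sub': "subalgebra m M'"
    and MM: "M \<subseteq> M'" and x: "x \<in> M" and y: "y \<in> M"
  shows "DM M x y \<le> DM M' x y"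
proof -
  have "\<forall>W\<in>sepw M x y. \<exists>ab. is_edge m M (fst ab) (snd ab) \<and> W \<in> sepw M (fst ab) (snd ab) \<and> lam M W = d (fst ab) (snd ab)"
    using lam_attained[OF fin sub] unfolding sep_walls_def by fastforce
  then obtain e where e: "\<And>W. W \<in> sepw M x y \<Longrightarrow> is_edge m M (fst (e W)) (snd (e W)) \<and>
      W \<in> sepw M (fst (e W)) (snd (e W)) \<and> lam M W = d (fst (e W)) (snd (e W))"
    by metis
  let ?S' = "sepw M' x y"
  have step1: "lam M W \<le> (\<Sum>W'\<in>{W'\<in>?S'. restr M W' = W}. lam M' W')" if W: "W \<in> sepw M x y" for W
  proof -
    define a b where "a = fst (e W)" and "b = snd (e W)"
    have ed: "is_edge m M a b" "W \<in> sepw M a b" "lam M W = d a b" using e[OF W] a_def b_def by auto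
    have abM: "a \<in> M" "b \<in> M" using ed(1) unfolding is_edge_def by auto
    have "d a b \<le> (\<Sum>W'\<in>sepw M' a b. lam M' W')"
      using path_main[OF fin' sub'] abM MM by blast
    also have "\<dots> \<le> (\<Sum>W'\<in>{W'\<in>?S'. restr M W' = W}. lam M' W')"
    proof (rule sum_mono2)
      show "finite {W'\<in>?S'. restr M W' = W}" using sepw_finite[OF fin'] by auto
      show "sepw M' a b \<subseteq> {W'\<in>?S'. restr M W' = W}"
      proof
        fix W' assume W': "W' \<in> sepw M' a b"
        have r: "restr M W' \<in> walls m M \<and> separates (restr M W') a b"
          using restr_wall[OF MM _ abM] W' unfolding sep_walls_def by auto
        then have "restr M W' \<in> sepw M a b" unfolding sep_walls_def by auto
        then have eq: "restr M W' = W" using ed(1,2) unfolding is_edge_def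
          by (metis card_1_singletonE singletonD)
        have "separates W x y" using W unfolding sep_walls_def by auto
        then have "separates W' x y" using restr_back[OF x y] eq by auto
        then show "W' \<in> {W'\<in>?S'. restr M W' = W}" using W' eq unfolding sep_walls_def by auto
      qed
      show "\<And>V. V \<in> {W'\<in>?S'. restr M W' = W} - sepw M' a b \<Longrightarrow> 0 \<le> lam M' V"
        using lam_nonneg[OF fin' sub'] unfolding sep_walls_def by auto
    qed
    finally show ?thesis using ed(3) by simp
  qed
  have "DM M x y = (\<Sum>W\<in>sepw M x y. lam M W)" unfolding d_mu_M_def using x y by simp
  also have "\<dots> \<le> (\<Sum>W\<in>sepw M x y. \<Sum>W'\<in>{W'\<in>?S'. restr M W' = W}. lam M' W')"
    by (rule sum_mono) (rule step1)
  also have "\<dots> = (\<Sum>W'\<in>?S'. lam M' W')"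
  proof (rule sum.group)
    show "finite ?S'" "finite (sepw M x y)" using sepw_finite fin fin' by auto
    show "restr M ` ?S' \<subseteq> sepw M x y"
    proof
      fix R assume "R \<in> restr M ` ?S'"
      then obtain W' where W': "W' \<in> ?S'" "R = restr M W'" by auto
      then show "R \<in> sepw M x y" using restr_wall[OF MM _ x y] unfolding sep_walls_def by auto
    qed
  qed
  also have "\<dots> = DM M' x y" unfolding d_mu_M_def using x y MM by auto
  finally show ?thesis .
qed

end



context mma begin

abbreviation "FS \<equiv> {M. finite M \<and> subalgebra m M}"
abbreviation "DU x y \<equiv> d_mu d m x y"

lemma FS_empty: "{} \<in> FS" unfolding subalgebra_def by auto

lemma gen_FS: "finite S \<Longrightarrow> gen S \<in> FS \<and> S \<subseteq> gen S"
  using gen_finite gen_subalg gen_sub by auto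

lemma DU_ge: "M \<in> FS \<Longrightarrow> ereal (DM M x y) \<le> DU x y"
  unfolding d_mu_def by (rule SUP_upper)

lemma DU_le: "(\<And>M. M \<in> FS \<Longrightarrow> ereal (DM M x y) \<le> c) \<Longrightarrow> DU x y \<le> c"
  unfolding d_mu_def by (rule SUP_least) auto

lemma DU_nonneg: "0 \<le> DU x y"
  using DU_ge[OF FS_empty, of x y] unfolding d_mu_M_def by (simp add: zero_ereal_def)

lemma DM_nonneg': "M \<in> FS \<Longrightarrow> 0 \<le> DM M x y" using DM_nonneg by auto

lemma DM_mono':
  assumes "M \<in> FS" "M' \<in> FS" "M \<subseteq> M'"
  shows "DM M x y \<le> DM M' x y"
proof (cases "x \<in> M \<and> y \<in> M")
  case True then show ?thesis using DM_mono assms by auto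
next
  case False
  then have "DM M x y = 0" unfolding d_mu_M_def by auto
  then show ?thesis using DM_nonneg' assms(2) by auto
qed

context
  assumes rect: "\<And>x y. DU x y < \<infinity>"
begin

definition D where "D x y = real_of_ereal (DU x y)"

lemma DU_D: "DU x y = ereal (D x y)"
  unfolding D_def using rect[of x y] DU_nonneg[of x y]
  by (cases "DU x y") auto

lemma D_ge: "M \<in> FS \<Longrightarrow> DM M x y \<le> D x y"
  using DU_ge DU_D by (metis ereal_less_eq(3))

lemma D_le: "(\<And>M. M \<in> FS \<Longrightarrow> DM M x y \<le> c) \<Longrightarrow> D x y \<le> c"
proof -
  assume "\<And>M. M \<in> FS \<Longrightarrow> DM M x y \<le> c"
  then have "DU x y \<le> ereal c" by (intro DU_le) auto
  then show ?thesis using DU_D by auto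
qed

lemma D_nonneg: "0 \<le> D x y" using DU_nonneg DU_D by (metis ereal_less_eq(5))

lemma D_sym: "D x y = D y x" unfolding D_def d_mu_def using DM_sym by metis

lemma D_refl: "D x x = 0" using D_le[of x x 0] DM_refl D_nonneg[of x x] by auto

lemma d_le_D: "d x y \<le> D x y"
proof -
  have G: "gen {x, y} \<in> FS" "{x, y} \<subseteq> gen {x, y}" using gen_FS[of "{x,y}"] by auto
  then have "d x y \<le> DM (gen {x,y}) x y" using d_le_DM by auto
  also have "\<dots> \<le> D x y" using D_ge G by auto
  finally show ?thesis .
qed

lemma D_add:
  assumes cxy: "m x y c = c"
  shows "D x y = D x c + D c y"
proof (rule antisym)
  show "D x y \<le> D x c + D c y"
  proof (rule D_le)
    fix M assume M: "M \<in> FS"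
    show "DM M x y \<le> D x c + D c y"
    proof (cases "x \<in> M \<and> y \<in> M")
      case True
      define M' where "M' = gen (M \<union> {c})"
      have M': "M' \<in> FS" "M \<union> {c} \<subseteq> M'" using gen_FS[of "M \<union> {c}"] M unfolding M'_def by auto
      have "DM M x y \<le> DM M' x y" using DM_mono' M M' by auto
      also have "\<dots> = DM M' x c + DM M' c y" using DM_split[of M' x y c] M' True cxy by auto
      also have "\<dots> \<le> D x c + D c y" using D_ge M' by (meson add_mono)
      finally show ?thesis .
    next
      case False
      then have "DM M x y = 0" unfolding d_mu_M_def by auto
      then show ?thesis using D_nonneg by (simp add: add_nonneg_nonneg)
    qed
  qed
next
  have key: "DM M1 x c + DM M2 c y \<le> D x y" if M1: "M1 \<in> FS" and M2: "M2 \<in> FS" for M1 M2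
  proof -
    define M' where "M' = gen (M1 \<union> M2 \<union> {x, y, c})"
    have M': "M' \<in> FS" "M1 \<union> M2 \<union> {x, y, c} \<subseteq> M'"
      using gen_FS[of "M1 \<union> M2 \<union> {x, y, c}"] M1 M2 unfolding M'_def by auto
    have "DM M1 x c + DM M2 c y \<le> DM M' x c + DM M' c y"
      using DM_mono'[OF M1 M'(1)] DM_mono'[OF M2 M'(1)] M'(2) by (meson add_mono le_sup_iff)
    also have "\<dots> = DM M' x y" using DM_split[of M' x y c] M' cxy by auto
    also have "\<dots> \<le> D x y" using D_ge M' by auto
    finally show ?thesis .
  qed
  have "D c y \<le> D x y - D x c"
  proof (rule D_le)
    fix M2 assume M2: "M2 \<in> FS"
    have "D x c \<le> D x y - DM M2 c y"
      using key M2 by (intro D_le) (auto simp: algebra_simps)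
    then show "DM M2 c y \<le> D x y - D x c" by linarith
  qed
  then show "D x c + D c y \<le> D x y" by linarith
qed

lemma D_tri: "D x z \<le> D x y + D y z"
proof -
  define p where "p = m x y z"
  have 1: "D x z = D x p + D p z" using D_add[of x z p] unfolding p_def
    by (metis E1 c1 c2)
  have 2: "D x y = D x p + D p y" using D_add[of x y p] unfolding p_def by (metis E1)
  have 3: "D y z = D y p + D p z" using D_add[of y z p] unfolding p_def by (metis E1 c2)
  show ?thesis using 1 2 3 D_nonneg[of p y] D_nonneg[of y p] by linarith
qed

lemma D_zero: "D x y = 0 \<longleftrightarrow> x = y"
  using d_le_D[of x y] dnn[of x y] d0iff[of x y] D_refl by (metis order_antisym)

lemma D_metric: "Metric_space UNIV D"
proof (rule Metric_space.intro)
  show "\<And>x y. 0 \<le> D x y" by (rule D_nonneg)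
  show "\<And>x y. D x y = D y x" by (rule D_sym)
  show "\<And>x y. x \<in> UNIV \<Longrightarrow> y \<in> UNIV \<Longrightarrow> (D x y = 0) = (x = y)" by (rule D_zero)
  show "\<And>x y z. x \<in> UNIV \<Longrightarrow> y \<in> UNIV \<Longrightarrow> z \<in> UNIV \<Longrightarrow> D x z \<le> D x y + D y z" by (rule D_tri)
qed

lemma D_between: "m x y z = z \<Longrightarrow> geod_between D x z y"
  unfolding geod_between_def using D_add by auto

lemma D_median_set: "median_set D x1 x2 x3 = {m x1 x2 x3}"
proof
  show "{m x1 x2 x3} \<subseteq> median_set D x1 x2 x3"
    unfolding median_set_def using D_between E1 c1 c2 c3 by (metis (no_types, lifting) empty_subsetI insert_subset mem_Collect_eq)
next
  have inI: "m a b z = z" if "geod_between D a z b" for a b z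
  proof -
    define p where "p = m a b z"
    have 1: "D a b = D a p + D p b" using D_add[of a b p] E1 unfolding p_def by metis
    have 2: "D a z = D a p + D p z" using D_add[of a z p] unfolding p_def by (metis E1 c1 c3)
    have 3: "D z b = D z p + D p b" using D_add[of z b p] unfolding p_def by (metis E1 c1 c2 c3)
    have "D p z = 0" using 1 2 3 that D_sym[of z p] unfolding geod_between_def by linarith
    then show ?thesis using D_zero unfolding p_def by auto
  qed
  show "median_set D x1 x2 x3 \<subseteq> {m x1 x2 x3}"
  proof
    fix z assume "z \<in> median_set D x1 x2 x3"
    then have "m x1 x2 z = z" "m x2 x3 z = z" "m x3 x1 z = z"
      unfolding median_set_def using inI by auto
    then show "z \<in> {m x1 x2 x3}" using E5 c3 by (metis singletonI)
  qed
qed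

end
end



context mma begin

context
  fixes f :: "'a \<Rightarrow> 'a"
  assumes bij: "bij f" and iso: "\<And>x y. d (f x) (f y) = d x y"
    and hom: "\<And>x y z. f (m x y z) = m (f x) (f y) (f z)"
begin

lemma inj: "inj f" using bij bij_is_inj by auto
lemma surj: "surj f" using bij bij_is_surj by auto

abbreviation "F W \<equiv> (`) f ` W"

lemma fmem: "f a \<in> f ` A \<longleftrightarrow> a \<in> A" using inj by (auto dest: injD)

lemma med_iff: "m (f a) (f b) (f w) = f w \<longleftrightarrow> m a b w = w"
  using hom inj by (metis injD)

lemma conv_tr:
  assumes CM: "C \<subseteq> M" shows "convex_in m (f ` M) (f ` C) \<longleftrightarrow> convex_in m M C"
proof
  assume c: "convex_in m (f ` M) (f ` C)"
  have "\<forall>a\<in>C. \<forall>b\<in>C. median_interval m a b \<inter> M \<subseteq> C"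
  proof (intro ballI subsetI)
    fix a b z assume "a \<in> C" "b \<in> C" "z \<in> median_interval m a b \<inter> M"
    then have "f z \<in> median_interval m (f a) (f b) \<inter> f ` M" "f a \<in> f ` C" "f b \<in> f ` C"
      using med_iff unfolding median_interval_def by auto
    then have "f z \<in> f ` C" using c unfolding convex_in_def by blast
    then show "z \<in> C" using fmem by auto
  qed
  then show "convex_in m M C" unfolding convex_in_def using CM by blast
next
  assume c: "convex_in m M C"
  have "\<forall>a\<in>f ` C. \<forall>b\<in>f ` C. median_interval m a b \<inter> f ` M \<subseteq> f ` C"
  proof (intro ballI subsetI)
    fix a b z assume a: "a \<in> f ` C" and b: "b \<in> f ` C" and z: "z \<in> median_interval m a b \<inter> f ` M"
    obtain a' b' z' where e: "a = f a'" "b = f b'" "z = f z'" "a' \<in> C" "b' \<in> C" "z' \<in> M"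
      using a b z by auto
    then have "z' \<in> median_interval m a' b' \<inter> M" using z med_iff unfolding median_interval_def by auto
    then have "z' \<in> C" using c e unfolding convex_in_def by blast
    then show "z \<in> f ` C" using e by auto
  qed
  then show "convex_in m (f ` M) (f ` C)" unfolding convex_in_def using CM by blast
qed

lemma diff_tr: "f ` (M - h) = f ` M - f ` h" using inj by (simp add: image_set_diff)

lemma walls_tr: "walls m (f ` M) = F ` walls m M"
proof
  show "F ` walls m M \<subseteq> walls m (f ` M)"
  proof
    fix W' assume "W' \<in> F ` walls m M"
    then obtain W where W: "W \<in> walls m M" "W' = F W" by auto
    obtain h where h: "W = {h, M - h}" "h \<subseteq> M" "h \<noteq> {}" "M - h \<noteq> {}"
      "convex_in m M h" "convex_in m M (M - h)" using W unfolding walls_def by blast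
    have "W' = {f ` h, f ` M - f ` h}" using W(2) h(1) diff_tr by auto
    moreover have "convex_in m (f ` M) (f ` h)" using conv_tr h by auto
    moreover have "convex_in m (f ` M) (f ` M - f ` h)" using conv_tr[of "M - h" M] h diff_tr by auto
    moreover have "f ` h \<subseteq> f ` M" "f ` h \<noteq> {}" using h by auto
    moreover have "f ` M - f ` h \<noteq> {}" using h(4) diff_tr[of M h] by (metis image_is_empty)
    ultimately show "W' \<in> walls m (f ` M)" unfolding walls_def by blast
  qed
next
  show "walls m (f ` M) \<subseteq> F ` walls m M"
  proof
    fix W' assume "W' \<in> walls m (f ` M)"
    then obtain h' where h': "W' = {h', f ` M - h'}" "h' \<subseteq> f ` M" "h' \<noteq> {}" "f ` M - h' \<noteq> {}"
      "convex_in m (f ` M) h'" "convex_in m (f ` M) (f ` M - h')" unfolding walls_def by blast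
    define h where "h = M \<inter> f -` h'"
    have fh: "f ` h = h'" unfolding h_def using h'(2) by auto
    have hM: "h \<subseteq> M" unfolding h_def by auto
    have W'e: "W' = F {h, M - h}" using h'(1) fh diff_tr by auto
    have "convex_in m M h" using conv_tr[OF hM] h'(5) fh by auto
    moreover have "convex_in m M (M - h)" using conv_tr[of "M - h" M] h'(6) fh diff_tr by auto
    moreover have "h \<noteq> {}" using h' fh by auto
    moreover have "M - h \<noteq> {}" using h'(4) fh diff_tr[of M h] by auto
    ultimately have "{h, M - h} \<in> walls m M" unfolding walls_def using hM by blast
    then show "W' \<in> F ` walls m M" using W'e by (metis image_eqI)
  qed
qed

lemma sep_tr: "separates (F W) (f a) (f b) \<longleftrightarrow> separates W a b"
  unfolding separates_def using fmem by auto

lemma injF: "inj F"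
proof -
  have i1: "inj ((`) f)" using inj by (meson injI inj_image_eq_iff)
  then show ?thesis using inj_image_eq_iff by (metis injI)
qed

lemma sepw_tr: "sepw (f ` M) (f a) (f b) = F ` sepw M a b"
  unfolding sep_walls_def walls_tr using sep_tr by auto

lemma card_sepw_tr: "card (sepw (f ` M) (f a) (f b)) = card (sepw M a b)"
  unfolding sepw_tr using injF by (simp add: card_image inj_on_subset)

lemma edge_tr: "is_edge m (f ` M) (f a) (f b) \<longleftrightarrow> is_edge m M a b"
  unfolding is_edge_def using card_sepw_tr fmem by auto

lemma inF: "F W \<in> F ` S \<longleftrightarrow> W \<in> S" using injF by (auto dest: injD)

lemma lam_tr: "lam (f ` M) (F W) = lam M W"
proof -
  have "{d a b | a b. is_edge m (f ` M) a b \<and> F W \<in> sepw (f ` M) a b} =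
        {d a b | a b. is_edge m M a b \<and> W \<in> sepw M a b}"
  proof (intro equalityI subsetI)
    fix v assume "v \<in> {d a b | a b. is_edge m (f ` M) a b \<and> F W \<in> sepw (f ` M) a b}"
    then obtain a b where ab: "v = d a b" "is_edge m (f ` M) a b" "F W \<in> sepw (f ` M) a b" by auto
    then obtain a' b' where "a = f a'" "b = f b'" unfolding is_edge_def by auto
    then show "v \<in> {d a b | a b. is_edge m M a b \<and> W \<in> sepw M a b}"
      using ab edge_tr sepw_tr inF iso by auto
  next
    fix v assume "v \<in> {d a b | a b. is_edge m M a b \<and> W \<in> sepw M a b}"
    then obtain a b where ab: "v = d a b" "is_edge m M a b" "W \<in> sepw M a b" by auto
    then show "v \<in> {d a b | a b. is_edge m (f ` M) a b \<and> F W \<in> sepw (f ` M) a b}"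
      using edge_tr sepw_tr inF iso by (metis (mono_tags, lifting) mem_Collect_eq)
  qed
  then show ?thesis unfolding lambda_max_def by simp
qed

lemma DM_tr: "DM (f ` M) (f x) (f y) = DM M x y"
proof (cases "x \<in> M \<and> y \<in> M")
  case True
  have "DM (f ` M) (f x) (f y) = (\<Sum>W'\<in>F ` sepw M x y. lam (f ` M) W')"
    unfolding d_mu_M_def sepw_tr using True by auto
  also have "\<dots> = (\<Sum>W\<in>sepw M x y. lam (f ` M) (F W))"
    using injF by (simp add: sum.reindex inj_on_subset)
  also have "\<dots> = DM M x y" unfolding d_mu_M_def using True lam_tr by simp
  finally show ?thesis .
next
  case False then show ?thesis unfolding d_mu_M_def using fmem by auto
qed

lemma FS_tr: "(`) f ` FS = FS"
proof
  show "(`) f ` FS \<subseteq> FS"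
  proof
    fix M' assume "M' \<in> (`) f ` FS"
    then obtain M where "M \<in> FS" "M' = f ` M" by auto
    then show "M' \<in> FS" unfolding subalgebra_def using hom by (auto simp flip: hom)
  qed
next
  show "FS \<subseteq> (`) f ` FS"
  proof
    fix M' assume M': "M' \<in> FS"
    define M where "M = f -` M'"
    have "f ` M = M'" unfolding M_def using surj by (simp add: surj_image_vimage_eq)
    moreover have "finite M" unfolding M_def using M' inj by (auto intro: finite_vimageI)
    moreover have "subalgebra m M" unfolding M_def subalgebra_def using M' hom
      unfolding subalgebra_def by auto
    ultimately show "M' \<in> (`) f ` FS" by auto
  qed
qed

lemma DU_tr: "DU (f x) (f y) = DU x y"
proof -
  have "DU (f x) (f y) = (SUP M\<in>(`) f ` FS. ereal (DM M (f x) (f y)))"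
    unfolding d_mu_def FS_tr ..
  also have "\<dots> = (SUP M\<in>FS. ereal (DM (f ` M) (f x) (f y)))" by (simp add: image_comp)
  also have "\<dots> = DU x y" unfolding d_mu_def DM_tr ..
  finally show ?thesis .
qed

end
end



theorem proposition3p3:
  fixes d :: "'a \<Rightarrow> 'a \<Rightarrow> real" and \<mu> :: "'a \<Rightarrow> 'a \<Rightarrow> 'a \<Rightarrow> 'a"
  assumes "metric_median_algebra d \<mu>"
    and "rectifiable d \<mu>"
  shows "median_metric (\<lambda>x y. real_of_ereal (d_mu d \<mu> x y))
    \<and> (\<forall>f. isometric_automorphism d \<mu> f \<longrightarrow>
           (\<forall>x y. d_mu d \<mu> (f x) (f y) = d_mu d \<mu> x y))
    \<and> (\<forall>x y z. intrinsic_median (\<lambda>x y. real_of_ereal (d_mu d \<mu> x y)) x y z = \<mu> x y z)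
    \<and> (uniformly_rectifiable d \<mu> \<longrightarrow>
        (\<exists>c C::real. c > 0 \<and> C > 0 \<and>
           (\<forall>x y. c * d x y \<le> real_of_ereal (d_mu d \<mu> x y)
                 \<and> real_of_ereal (d_mu d \<mu> x y) \<le> C * d x y)))"
proof -
  have met: "Metric_space UNIV d" and ma: "median_algebra \<mu>"
    using assms(1) unfolding metric_median_algebra_def by auto
  interpret M: mma \<mu> d
    using ma_of[OF ma] met by (simp add: mma_def mma_axioms_def)
  have rect: "\<And>x y. d_mu d \<mu> x y < \<infinity>" using assms(2) unfolding rectifiable_def by auto
  have Deq: "(\<lambda>x y. real_of_ereal (d_mu d \<mu> x y)) = M.D"
    by (intro ext) (simp add: M.DU_D[OF rect])
  have P1: "median_metric (\<lambda>x y. real_of_ereal (d_mu d \<mu> x y))"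
    unfolding Deq median_metric_def using M.D_metric[OF rect] M.D_median_set[OF rect] by blast
  have P2: "\<forall>f. isometric_automorphism d \<mu> f \<longrightarrow> (\<forall>x y. d_mu d \<mu> (f x) (f y) = d_mu d \<mu> x y)"
    unfolding isometric_automorphism_def using M.DU_tr by blast
  have P3: "\<forall>x y z. intrinsic_median (\<lambda>x y. real_of_ereal (d_mu d \<mu> x y)) x y z = \<mu> x y z"
    unfolding Deq intrinsic_median_def using M.D_median_set[OF rect] by simp
  have P4: "uniformly_rectifiable d \<mu> \<longrightarrow>
        (\<exists>c C::real. c > 0 \<and> C > 0 \<and>
           (\<forall>x y. c * d x y \<le> real_of_ereal (d_mu d \<mu> x y)
                 \<and> real_of_ereal (d_mu d \<mu> x y) \<le> C * d x y))"
  proof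
    assume "uniformly_rectifiable d \<mu>"
    then obtain L :: real where L: "L \<ge> 0" "\<And>x y. d_mu d \<mu> x y \<le> ereal (L * d x y)"
      unfolding uniformly_rectifiable_def by auto
    have up: "M.D x y \<le> (L + 1) * d x y" for x y
    proof -
      have "ereal (M.D x y) \<le> ereal (L * d x y)" using L(2) M.DU_D[OF rect] by metis
      then have "M.D x y \<le> L * d x y" by simp
      also have "\<dots> \<le> (L + 1) * d x y" using M.dnn[of x y] by (simp add: algebra_simps)
      finally show ?thesis .
    qed
    have "\<forall>x y. 1 * d x y \<le> M.D x y \<and> M.D x y \<le> (L + 1) * d x y"
      using M.d_le_D[OF rect] up by auto
    then show "\<exists>c C::real. c > 0 \<and> C > 0 \<and>
           (\<forall>x y. c * d x y \<le> real_of_ereal (d_mu d \<mu> x y)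
                 \<and> real_of_ereal (d_mu d \<mu> x y) \<le> C * d x y)"
    proof (intro exI conjI)
      show "(1::real) > 0" "L + 1 > 0" using L(1) by auto
      show "\<forall>x y. 1 * d x y \<le> real_of_ereal (d_mu d \<mu> x y)
                 \<and> real_of_ereal (d_mu d \<mu> x y) \<le> (L + 1) * d x y"
        using \<open>\<forall>x y. 1 * d x y \<le> M.D x y \<and> M.D x y \<le> (L + 1) * d x y\<close>
        by (simp add: M.DU_D[OF rect])
    qed
  qed
  show ?thesis using P1 P2 P3 P4 by blast
qed


end
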